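(* Let $I\subset[0,\infty)$ be an interval, let $a,b\in I^\circ$ with $a<b$, and let $f:I\to\mathbb{R}$ be twice differentiable on $I^\circ$ with $f''\in L^1([a,b])$. Assume $|f''|$ is $h$-convex on $[a,b]$. Then $$\left|\frac{1}{b-a}\int_a^b f(x)\,dx-f\Big(\frac{a+b}{2}\Big)\right|\le (b-a)^2\,\frac{|f''(a)|+|f''(b)|}{2}\int_0^1 m(t)h(t)\,dt,$$ where $m(t)=t^2$ for $t\in[0,\frac12)$ and $m(t)=(1-t)^2$ for $t\in[\frac12,1]$.
   Context: Let $J$ be an interval with $(0,1)\subseteq J$ and $h:J\to\mathbb{R}$ a non-negative function, not identically zero, which is Lebesgue integrable on $(0,1)$. A non-negative function $g$ defined on an interval $K$ is called $h$-convex on $K$ if for all $x,y\in K$ and all $t\in(0,1)$: $g(tx+(1-t)y)\le h(t)g(x)+h(1-t)g(y)$. $I^\circ$ denotes the interior of $I$. *)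

theory Defs
  imports "HOL-Analysis.Analysis"
begin

definition h_convex :: "(real \<Rightarrow> real) \<Rightarrow> real set \<Rightarrow> (real \<Rightarrow> real) \<Rightarrow> bool" where
  "h_convex h K g \<longleftrightarrow> is_interval K \<and> (\<forall>x\<in>K. 0 \<le> g x) \<and>
     (\<forall>x\<in>K. \<forall>y\<in>K. \<forall>t\<in>{0<..<1}. g (t * x + (1 - t) * y) \<le> h t * g x + h (1 - t) * g y)"

definition mkernel :: "real \<Rightarrow> real" where
  "mkernel t = (if t < 1/2 then t^2 else (1 - t)^2)"

end

theory Submission imports Defs begin

lemma mk_lo: assumes "t \<le> 1/2" shows "mkernel t = t^2"
proof (cases "t < 1/2")
  case False
  with assms have "t = 1/2" by simp
  then show ?thesis unfolding mkernel_def \<open>t = 1/2\<close> by (simp add: power2_eq_square)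
qed (simp add: mkernel_def)
lemma mk_hi: "1/2 \<le> t \<Longrightarrow> mkernel t = (1-t)^2"
  unfolding mkernel_def by (auto simp: power2_eq_square)
lemma mk_sym: "mkernel (1 - t) = mkernel t"
  by (cases "t \<le> 1/2") (auto simp: mk_lo mk_hi)
lemma mk_nonneg: "0 \<le> mkernel t"
  unfolding mkernel_def by auto

lemma affine_int:
  fixes psi :: "real \<Rightarrow> real" and a b I :: real
  assumes psi: "(psi has_integral I) {0..1}" and ab: "a < b"
  shows "((\<lambda>x. psi ((x - a) / (b - a))) has_integral (b - a) * I) {a..b}"
    and "((\<lambda>x. psi ((b - x) / (b - a))) has_integral (b - a) * I) {a..b}"
proof -
  have m: "1 / (b - a) > 0" using ab by auto
  have e5: "I /\<^sub>R (1 / (b - a)) ^ DIM(real) = (b - a) * I" by simp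
  note 1 = has_integral_affinity'[OF psi[unfolded cbox_interval[symmetric]] m, of "-a/(b-a)"]
  have e1: "(0 - (- a / (b - a))) /\<^sub>R (1 / (b - a)) = a" "(1 - (- a / (b - a))) /\<^sub>R (1 / (b - a)) = b"
    using ab by (simp_all add: divide_simps)
  have "\<And>x. (1 / (b - a)) *\<^sub>R x + (- a / (b - a)) = (x - a) / (b - a)"
    by (simp add: diff_divide_distrib)
  then have e2: "(\<lambda>x. psi ((1 / (b - a)) *\<^sub>R x + (- a / (b - a)))) = (\<lambda>x. psi ((x - a) / (b - a)))"
    by simp
  from 1 have "((\<lambda>x. psi ((x - a) / (b - a))) has_integral (b - a) * I) (cbox a b)"
    by (simp only: e1 e2 e5)
  then show "((\<lambda>x. psi ((x - a) / (b - a))) has_integral (b - a) * I) {a..b}"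
    by (simp add: cbox_interval)
  have psi': "((\<lambda>x. psi (-x)) has_integral I) {-1..-0}"
    using psi by (simp only: has_integral_reflect_real)
  note 2 = has_integral_affinity'[OF psi'[unfolded cbox_interval[symmetric]] m, of "-b/(b-a)"]
  have e3: "(-1 - (- b / (b - a))) /\<^sub>R (1 / (b - a)) = a" "(-0 - (- b / (b - a))) /\<^sub>R (1 / (b - a)) = b"
    using ab by (simp_all add: divide_simps)
  have "\<And>x. - ((1 / (b - a)) *\<^sub>R x + (- b / (b - a))) = (b - x) / (b - a)"
    by (simp add: diff_divide_distrib)
  then have e4: "(\<lambda>x. (\<lambda>x. psi (-x)) ((1 / (b - a)) *\<^sub>R x + (- b / (b - a)))) = (\<lambda>x. psi ((b - x) / (b - a)))"
    by simp
  from 2 have "((\<lambda>x. psi ((b - x) / (b - a))) has_integral (b - a) * I) (cbox a b)"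
    by (simp only: e3 e4 e5)
  then show "((\<lambda>x. psi ((b - x) / (b - a))) has_integral (b - a) * I) {a..b}"
    by (simp add: cbox_interval)
qed

lemma mk_meas: "mkernel \<in> borel_measurable lborel"
  unfolding mkernel_def by measurable

lemma psi_int:
  assumes h_int: "set_integrable lborel {0<..<1} h"
  shows "set_integrable lborel {0<..<1} (\<lambda>t. mkernel t * h t)"
  unfolding set_integrable_def
proof (rule Bochner_Integration.integrable_bound)
  show "integrable lborel (\<lambda>x. indicator {0<..<1} x *\<^sub>R h x)"
    using h_int unfolding set_integrable_def .
  then have "(\<lambda>x. indicator {0<..<1} x *\<^sub>R h x) \<in> borel_measurable lborel" by auto
  then have "(\<lambda>x. mkernel x * (indicator {0<..<1} x *\<^sub>R h x)) \<in> borel_measurable lborel"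
    using mk_meas by measurable
  then show "(\<lambda>x. indicator {0<..<1} x *\<^sub>R (mkernel x * h x)) \<in> borel_measurable lborel"
    by (simp add: mult.left_commute)
  show "AE x in lborel. norm (indicator {0<..<1} x *\<^sub>R (mkernel x * h x)) \<le> norm (indicator {0<..<1} x *\<^sub>R h x)"
  proof (rule AE_I2)
    fix x :: real
    show "norm (indicator {0<..<1} x *\<^sub>R (mkernel x * h x)) \<le> norm (indicator {0<..<1} x *\<^sub>R h x)"
    proof (cases "x \<in> {0<..<1}")
      case True
      then have "0 \<le> mkernel x" "mkernel x \<le> 1" unfolding mkernel_def
        by (auto simp: power_le_one)
      then show ?thesis using True by (auto simp: abs_mult intro: mult_left_le_one_le)
    qed simp
  qed
qed

theorem theorem10:
  fixes J I :: "real set" and h f f' f'' :: "real \<Rightarrow> real" and a b :: real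
  assumes J: "is_interval J" "{0<..<1} \<subseteq> J"
    and h_nonneg: "\<forall>x\<in>J. 0 \<le> h x"
    and h_nonzero: "\<exists>x\<in>J. h x \<noteq> 0"
    and h_int: "set_integrable lborel {0<..<1} h"
    and I: "is_interval I" "I \<subseteq> {0..}"
    and ab: "a \<in> interior I" "b \<in> interior I" "a < b"
    and f': "\<forall>x\<in>interior I. (f has_real_derivative f' x) (at x)"
    and f'': "\<forall>x\<in>interior I. (f' has_real_derivative f'' x) (at x)"
    and f''_int: "set_integrable lborel {a..b} f''"
    and hconv: "h_convex h {a..b} (\<lambda>x. \<bar>f'' x\<bar>)"
  shows "\<bar>(1 / (b - a)) * (LBINT x:{a..b}. f x) - f ((a + b) / 2)\<bar>
    \<le> (b - a)^2 * ((\<bar>f'' a\<bar> + \<bar>f'' b\<bar>) / 2) * (LBINT t:{0<..<1}. mkernel t * h t)"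
proof -
  define c where "c = (a + b) / 2"
  define A where "A = \<bar>f'' a\<bar>"
  define B where "B = \<bar>f'' b\<bar>"
  define psi where "psi = (\<lambda>t. mkernel t * h t)"
  define Ih where "Ih = integral {0..1} psi"
  define Phi where "Phi = (\<lambda>x. integral {a..x} f)"
  define K where "K = (\<lambda>x. (b - a)^2 / 2 * mkernel ((b - x) / (b - a)))"
  have ac: "a \<le> c" "c \<le> b" using ab(3) by (auto simp: c_def)
  have sub: "{a..b} \<subseteq> interior I"
  proof
    fix x assume x: "x \<in> {a..b}"
    have "convex I" using I(1) by (rule is_interval_convex)
    then have "convex (interior I)" by (rule convex_interior)
    then have ii: "is_interval (interior I)" by (simp only: is_interval_convex_1)
    show "x \<in> interior I" using x by (intro mem_is_interval_1_I[OF ii ab(1) ab(2)]) auto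
  qed
  have d1: "(f has_real_derivative f' x) (at x)" if "x \<in> {a..b}" for x
    using f' sub that by auto
  have d2: "(f' has_real_derivative f'' x) (at x)" if "x \<in> {a..b}" for x
    using f'' sub that by auto
  have contf: "continuous_on {a..b} f"
    by (rule continuous_at_imp_continuous_on) (use d1 DERIV_isCont in blast)
  have dPhi: "(Phi has_real_derivative f x) (at x within {a..b})" if "x \<in> {a..b}" for x
    unfolding Phi_def using integral_has_real_derivative[OF contf that] .
  have psiL: "set_integrable lborel {0<..<1} psi"
    unfolding psi_def by (rule psi_int[OF h_int])
  have LB: "(LBINT t:{0<..<1}. mkernel t * h t) = Ih"
    using set_borel_integral_eq_integral(2)[OF psiL]
    unfolding Ih_def psi_def by (simp add: integral_open_interval_real)
  have psiI: "(psi has_integral Ih) {0..1}"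
    using set_borel_integral_eq_integral(1)[OF psiL] unfolding Ih_def
    by (intro integrable_integral) (simp add: integrable_on_Icc_iff_Ioo)
  have LBf: "(LBINT x:{a..b}. f x) = Phi b"
  proof -
    have "set_integrable lborel {a..b} f"
      unfolding set_integrable_def by (rule borel_integrable_compact[OF compact_Icc contf])
    then show ?thesis unfolding Phi_def by (rule set_borel_integral_eq_integral(2))
  qed
  define F where "F = (\<lambda>x. (x - a)^2 / 2 * f' x - (x - a) * f x + Phi x)"
  have FI: "((\<lambda>x. K x * f'' x) has_integral (F c - F a)) {a..c}"
  proof -
    have I1: "((\<lambda>x. (x - a)^2 / 2 * f'' x) has_integral (F c - F a)) {a..c}"
    proof (rule fundamental_theorem_of_calculus[OF ac(1)])
      fix x assume x: "x \<in> {a..c}"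
      then have xab: "x \<in> {a..b}" using ac by auto
      have e1: "(f has_real_derivative f' x) (at x within {a..c})"
        using d1[OF xab] by (rule has_field_derivative_at_within)
      have e2: "(f' has_real_derivative f'' x) (at x within {a..c})"
        using d2[OF xab] by (rule has_field_derivative_at_within)
      have e3: "(Phi has_real_derivative f x) (at x within {a..c})"
        using dPhi[OF xab] by (rule DERIV_subset) (use ac in auto)
      have q: "((\<lambda>x. (x - a)^2 / 2) has_real_derivative (x - a)) (at x within {a..c})"
        by (auto intro!: derivative_eq_intros)
      have r: "((\<lambda>x. x - a) has_real_derivative 1) (at x within {a..c})"
        by (auto intro!: derivative_eq_intros)
      have "(F has_real_derivative
          (((x - a)^2 / 2) * f'' x + (x - a) * f' x - ((x - a) * f' x + 1 * f x) + f x)) (at x within {a..c})"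
        unfolding F_def by (intro DERIV_add DERIV_diff DERIV_mult' q r e1 e2 e3)
      then have "(F has_real_derivative ((x - a)^2 / 2 * f'' x)) (at x within {a..c})"
        by (rule DERIV_cong) simp
      then show "(F has_vector_derivative ((x - a)^2 / 2 * f'' x)) (at x within {a..c})"
        by (simp add: has_real_derivative_iff_has_vector_derivative)
    qed
    have eq: "(x - a)^2 / 2 * f'' x = K x * f'' x" if "x \<in> {a..c}" for x
    proof -
      have "1/2 \<le> (b - x) / (b - a)" using that ab(3) by (simp add: c_def field_simps)
      then have "K x = (b - a)^2 / 2 * (1 - (b - x) / (b - a))^2" unfolding K_def by (simp add: mk_hi)
      also have "1 - (b - x) / (b - a) = (x - a) / (b - a)" using ab(3) by (simp add: field_simps)
      finally show ?thesis using ab(3) by (simp add: power_divide)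
    qed
    show ?thesis by (rule has_integral_eq[OF eq I1])
  qed
  define G where "G = (\<lambda>x. (b - x)^2 / 2 * f' x + (b - x) * f x + Phi x)"
  have GI: "((\<lambda>x. K x * f'' x) has_integral (G b - G c)) {c..b}"
  proof -
    have I1: "((\<lambda>x. (b - x)^2 / 2 * f'' x) has_integral (G b - G c)) {c..b}"
    proof (rule fundamental_theorem_of_calculus[OF ac(2)])
      fix x assume x: "x \<in> {c..b}"
      then have xab: "x \<in> {a..b}" using ac by auto
      have e1: "(f has_real_derivative f' x) (at x within {c..b})"
        using d1[OF xab] by (rule has_field_derivative_at_within)
      have e2: "(f' has_real_derivative f'' x) (at x within {c..b})"
        using d2[OF xab] by (rule has_field_derivative_at_within)
      have e3: "(Phi has_real_derivative f x) (at x within {c..b})"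
        using dPhi[OF xab] by (rule DERIV_subset) (use ac in auto)
      have q: "((\<lambda>x. (b - x)^2 / 2) has_real_derivative (- (b - x))) (at x within {c..b})"
        by (auto intro!: derivative_eq_intros)
      have r: "((\<lambda>x. b - x) has_real_derivative (- 1)) (at x within {c..b})"
        by (auto intro!: derivative_eq_intros)
      have "(G has_real_derivative
          (((b - x)^2 / 2) * f'' x + (- (b - x)) * f' x + ((b - x) * f' x + (- 1) * f x) + f x)) (at x within {c..b})"
        unfolding G_def by (intro DERIV_add DERIV_mult' q r e1 e2 e3)
      then have "(G has_real_derivative ((b - x)^2 / 2 * f'' x)) (at x within {c..b})"
        by (rule DERIV_cong) (simp add: algebra_simps)
      then show "(G has_vector_derivative ((b - x)^2 / 2 * f'' x)) (at x within {c..b})"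
        by (simp add: has_real_derivative_iff_has_vector_derivative)
    qed
    have eq: "(b - x)^2 / 2 * f'' x = K x * f'' x" if "x \<in> {c..b}" for x
    proof -
      have "(b - x) / (b - a) \<le> 1/2" using that ab(3) by (simp add: c_def field_simps)
      then have "K x = (b - a)^2 / 2 * ((b - x) / (b - a))^2" unfolding K_def by (simp add: mk_lo)
      then show ?thesis using ab(3) by (simp add: power_divide)
    qed
    show ?thesis by (rule has_integral_eq[OF eq I1])
  qed
  have KI: "((\<lambda>x. K x * f'' x) has_integral (Phi b - (b - a) * f c)) {a..b}"
  proof -
    have "((\<lambda>x. K x * f'' x) has_integral ((F c - F a) + (G b - G c))) {a..b}"
      by (rule has_integral_combine[OF ac FI GI])
    moreover have "(F c - F a) + (G b - G c) = Phi b - (b - a) * f c"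
      unfolding F_def G_def Phi_def using ab(3) by (simp add: c_def field_simps power2_eq_square)
    ultimately show ?thesis by simp
  qed
  define g where "g = (\<lambda>x. (b - a)^2 / 2 * (A * psi ((b - x) / (b - a)) + B * psi ((x - a) / (b - a))))"
  have gI: "(g has_integral (b - a)^2 / 2 * (A * ((b - a) * Ih) + B * ((b - a) * Ih))) {a..b}"
    unfolding g_def
    by (intro has_integral_mult_right has_integral_add affine_int[OF psiI ab(3)])
  have bound: "norm (K x * f'' x) \<le> g x" if x: "x \<in> {a..b}" for x
  proof (cases "x = a \<or> x = b")
    case True
    then show ?thesis unfolding K_def g_def psi_def mkernel_def using ab(3) by auto
  next
    case False
    define t where "t = (b - x) / (b - a)"
    have t01: "t \<in> {0<..<1}" using x False ab(3) by (auto simp: t_def field_simps)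
    have ba: "b - a \<noteq> 0" using ab(3) by simp
    have tb: "t * (b - a) = b - x" using ba by (simp add: t_def)
    have xt: "t * a + (1 - t) * b = x"
    proof -
      have "t * a + (1 - t) * b = b - t * (b - a)" by (simp add: algebra_simps)
      then show ?thesis using tb by simp
    qed
    have 1: "1 - t = (x - a) / (b - a)" using ab(3) by (simp add: t_def field_simps)
    have "\<bar>f'' x\<bar> \<le> h t * A + h (1 - t) * B"
    proof -
      have aa: "a \<in> {a..b}" "b \<in> {a..b}" using ab(3) by auto
      have "\<forall>x\<in>{a..b}. \<forall>y\<in>{a..b}. \<forall>t\<in>{0<..<1}. \<bar>f'' (t * x + (1 - t) * y)\<bar> \<le> h t * \<bar>f'' x\<bar> + h (1 - t) * \<bar>f'' y\<bar>"
        using hconv unfolding h_convex_def by blast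
      then have "\<bar>f'' (t * a + (1 - t) * b)\<bar> \<le> h t * \<bar>f'' a\<bar> + h (1 - t) * \<bar>f'' b\<bar>"
        using aa t01 by blast
      then show ?thesis unfolding xt A_def B_def .
    qed
    moreover have K0: "0 \<le> K x" unfolding K_def by (simp add: mk_nonneg)
    ultimately have "K x * \<bar>f'' x\<bar> \<le> K x * (h t * A + h (1 - t) * B)"
      by (rule mult_left_mono)
    moreover have "g x = K x * (h t * A + h (1 - t) * B)"
      unfolding g_def K_def psi_def 1[symmetric] t_def[symmetric] mk_sym by (simp add: algebra_simps)
    ultimately show ?thesis using K0 by (simp add: abs_mult)
  qed
  have "norm (integral {a..b} (\<lambda>x. K x * f'' x)) \<le> integral {a..b} g"
    by (rule integral_norm_bound_integral[OF has_integral_integrable[OF KI] has_integral_integrable[OF gI] bound])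
  then have main: "\<bar>Phi b - (b - a) * f c\<bar> \<le> (b - a)^2 / 2 * (A * ((b - a) * Ih) + B * ((b - a) * Ih))"
    using integral_unique[OF KI] integral_unique[OF gI] by simp
  have "\<bar>(1 / (b - a)) * Phi b - f c\<bar> = \<bar>Phi b - (b - a) * f c\<bar> / (b - a)"
    using ab(3) by (simp add: field_simps abs_divide)
  also have "\<dots> \<le> (b - a)^2 / 2 * (A * ((b - a) * Ih) + B * ((b - a) * Ih)) / (b - a)"
    using main ab(3) by (intro divide_right_mono) auto
  also have "\<dots> = (b - a)^2 * ((A + B) / 2) * Ih"
    using ab(3) by (simp add: field_simps power2_eq_square)
  finally show ?thesis unfolding LBf LB A_def B_def c_def .
qed

end
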